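(* Let $\mathbf{G}=\begin{bmatrix}\mathbf{G}_1\\ \mathbf{G}_0\end{bmatrix}\in\mathbb{F}_2^{m\times n}$ be a triorthogonal matrix with linearly independent rows ($\mathbf{G}_1\in\mathbb{F}_2^{k\times n}$ the odd-weight rows, $\mathbf{G}_0$ the even-weight rows), and let $\mathcal{Q}^T=\mathrm{CSS}(\mathcal{C}_1,\mathcal{C}_2)$ be the associated triorthogonal $[[n,k,d]]$ code, with $\mathcal{C}_1$ generated by $\mathbf{G}$ and $\mathcal{C}_2$ the dual of the code generated by $\mathbf{G}_0$; assume $\mathcal{Q}^T$ is T-triorthogonal. Let $\mathcal{C}\subseteq\mathbb{F}_2^n$ be a binary linear code with $\mathcal{C}_1\subset\mathcal{C}\subset\mathcal{C}_2$ such that $\mathcal{Q}^{\rm Sym}=\mathrm{CSS}(\mathcal{C},\mathcal{C})$ is a symmetric $[[n,k,d']]$ CSS code. Then $\mathcal{Q}^T$ and $\mathcal{Q}^{\rm Sym}$ form a CNOT-transversal code pair (with $\mathcal{Q}^T$ as control and $\mathcal{Q}^{\rm Sym}$ as target), and $d'\ge d$.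
   Context: A binary matrix $\mathbf{G}=[G_{ij}]$ is triorthogonal if $\sum_i G_{ai}G_{bi}=0\pmod 2$ for all rows $a\ne b$ and $\sum_i G_{ai}G_{bi}G_{ci}=0\pmod 2$ for all distinct rows $a,b,c$. For binary linear codes $\mathcal{C}_a,\mathcal{C}_b\subseteq\mathbb{F}_2^n$ with $\mathcal{C}_b^\perp\subset\mathcal{C}_a$, $\mathrm{CSS}(\mathcal{C}_a,\mathcal{C}_b)$ is spanned by $|\bm{\psi}\rangle_L=|\mathcal{C}_b^\perp|^{-1/2}\sum_{\mathbf{y}\in\mathcal{C}_b^\perp}|\bm{\psi}\mathbf{A}+\mathbf{y}\rangle$, $\bm{\psi}\in\mathbb{F}_2^k$, where $\mathbf{A}\in\mathbb{F}_2^{k\times n}$ (a mapping matrix) has rows forming representatives of a basis of $\mathcal{C}_a/\mathcal{C}_b^\perp$; its number of logical qubits is $k=\dim\mathcal{C}_a+\dim\mathcal{C}_b-n$ and its distance is $\min(d_a',d_b')$ where $d_a'$ is the minimum Hamming weight of vectors in $\mathcal{C}_a\setminus\mathcal{C}_b^\perp$ and $d_b'$ that of vectors in $\mathcal{C}_b\setminus\mathcal{C}_a^\perp$. A CSS code is symmetric if $\mathcal{C}_a=\mathcal{C}_b$ (so $\mathcal{C}^\perp\subseteq\mathcal{C}$). The triorthogonal code uses mapping matrix $\mathbf{G}_1$. It is called T-triorthogonal if it is Pauli $X$-transversal (applying $\mathbf{X}$ to every physical qubit implements logical $\mathbf{X}$ on every logical qubit); such codes are also transversal for the gate $\mathbf{T}=\mathrm{diag}(1,e^{i\pi/4})$.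 Two codes $\mathcal{Q}_1,\mathcal{Q}_2$ of length $n$ with $k$ logical qubits form a CNOT-transversal pair (control $\mathcal{Q}_1$, target $\mathcal{Q}_2$) if, for suitable mapping matrices defining their logical bases, applying a physical CNOT from qubit $i$ of the $\mathcal{Q}_1$ block to qubit $i$ of the $\mathcal{Q}_2$ block for every $i=1,\dots,n$ maps $|\bm{\psi}\rangle_L\otimes|\bm{\phi}\rangle_L\mapsto|\bm{\psi}\rangle_L\otimes|\bm{\psi}+\bm{\phi}\rangle_L$ for all $\bm{\psi},\bm{\phi}\in\mathbb{F}_2^k$, i.e., implements logical CNOT between corresponding logical qubits. *)

theory Defs
  imports Complex_Main "HOL-Library.Z2" "HOL-Library.Function_Algebras" "HOL-Library.Extended_Nat"
begin

text \<open>Binary vectors of length n are functions from a finite index type 'n (with CARD('n) = n)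
  to the field bit = F_2.  Vector addition is pointwise (Function_Algebras).
  Matrices are row families nat \<Rightarrow> ('n \<Rightarrow> bit); only the rows below the stated size are used.\<close>

definition smul :: "bit \<Rightarrow> ('n \<Rightarrow> bit) \<Rightarrow> ('n \<Rightarrow> bit)" where
  "smul c v = (\<lambda>i. c * v i)"

definition dot :: "('n::finite \<Rightarrow> bit) \<Rightarrow> ('n \<Rightarrow> bit) \<Rightarrow> bit" where
  "dot x y = (\<Sum>i\<in>UNIV. x i * y i)"

definition wt :: "('n::finite \<Rightarrow> bit) \<Rightarrow> nat" where
  "wt x = card {i. x i \<noteq> 0}"

definition row_span :: "nat set \<Rightarrow> (nat \<Rightarrow> 'n \<Rightarrow> bit) \<Rightarrow> ('n \<Rightarrow> bit) set" where
  "row_span S G = {(\<Sum>i\<in>S. smul (a i) (G i)) | a. True}"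

definition linear_code :: "('n \<Rightarrow> bit) set \<Rightarrow> bool" where
  "linear_code C \<longleftrightarrow> 0 \<in> C \<and> (\<forall>x\<in>C. \<forall>y\<in>C. x + y \<in> C)"

definition dual :: "('n::finite \<Rightarrow> bit) set \<Rightarrow> ('n \<Rightarrow> bit) set" where
  "dual C = {x. \<forall>y\<in>C. dot x y = 0}"

definition code_dim :: "('n \<Rightarrow> bit) set \<Rightarrow> nat" where
  "code_dim C = (THE d. card C = 2 ^ d)"

definition is_CSS :: "('n::finite \<Rightarrow> bit) set \<Rightarrow> ('n \<Rightarrow> bit) set \<Rightarrow> bool" where
  "is_CSS Ca Cb \<longleftrightarrow> linear_code Ca \<and> linear_code Cb \<and> dual Cb \<subseteq> Ca"

definition css_k :: "('n::finite \<Rightarrow> bit) set \<Rightarrow> ('n \<Rightarrow> bit) set \<Rightarrow> nat" where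
  "css_k Ca Cb = code_dim Ca + code_dim Cb - card (UNIV :: 'n set)"

definition css_distance :: "('n::finite \<Rightarrow> bit) set \<Rightarrow> ('n \<Rightarrow> bit) set \<Rightarrow> enat" where
  "css_distance Ca Cb =
     min (INF x \<in> Ca - dual Cb. enat (wt x)) (INF x \<in> Cb - dual Ca. enat (wt x))"

text \<open>Encoding psi A of a logical vector psi in F_2^k (only psi 0, ..., psi (k-1) matter).\<close>
definition enc :: "(nat \<Rightarrow> 'n \<Rightarrow> bit) \<Rightarrow> nat \<Rightarrow> (nat \<Rightarrow> bit) \<Rightarrow> ('n \<Rightarrow> bit)" where
  "enc A k psi = (\<Sum>i<k. smul (psi i) (A i))"

text \<open>Rows A_0..A_{k-1} are representatives of a basis of C_a / dual C_b.\<close>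
definition is_mapping_matrix ::
  "('n::finite \<Rightarrow> bit) set \<Rightarrow> ('n \<Rightarrow> bit) set \<Rightarrow> nat \<Rightarrow> (nat \<Rightarrow> 'n \<Rightarrow> bit) \<Rightarrow> bool" where
  "is_mapping_matrix Ca Cb k A \<longleftrightarrow>
     (\<forall>i<k. A i \<in> Ca) \<and>
     (\<forall>psi. enc A k psi \<in> dual Cb \<longrightarrow> (\<forall>i<k. psi i = 0)) \<and>
     (\<forall>x\<in>Ca. \<exists>psi. x + enc A k psi \<in> dual Cb)"

text \<open>States of n qubits: amplitude functions on computational basis strings.\<close>
definition basis_ket :: "'v \<Rightarrow> 'v \<Rightarrow> complex" where
  "basis_ket w = (\<lambda>v. if v = w then 1 else 0)"

definition logical_ket ::
  "(nat \<Rightarrow> 'n::finite \<Rightarrow> bit) \<Rightarrow> ('n \<Rightarrow> bit) set \<Rightarrow> nat \<Rightarrow> (nat \<Rightarrow> bit) \<Rightarrow> (('n \<Rightarrow> bit) \<Rightarrow> complex)" where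
  "logical_ket A Cb k psi =
     (\<lambda>v. (1 / sqrt (real (card (dual Cb)))) * (\<Sum>y\<in>dual Cb. basis_ket (enc A k psi + y) v))"

definition tensor :: "('v \<Rightarrow> complex) \<Rightarrow> ('w \<Rightarrow> complex) \<Rightarrow> ('v \<times> 'w \<Rightarrow> complex)" where
  "tensor f g = (\<lambda>(x, z). f x * g z)"

definition transversal_cnot ::
  "(('n::finite \<Rightarrow> bit) \<times> ('n \<Rightarrow> bit) \<Rightarrow> complex) \<Rightarrow> (('n \<Rightarrow> bit) \<times> ('n \<Rightarrow> bit) \<Rightarrow> complex)" where
  "transversal_cnot s = (\<lambda>q. \<Sum>p\<in>UNIV. s p * basis_ket (fst p, fst p + snd p) q)"

definition transversal_X :: "(('n::finite \<Rightarrow> bit) \<Rightarrow> complex) \<Rightarrow> (('n \<Rightarrow> bit) \<Rightarrow> complex)" where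
  "transversal_X s = (\<lambda>w. \<Sum>v\<in>UNIV. s v * basis_ket (v + 1) w)"

definition cnot_transversal_with ::
  "nat \<Rightarrow> (nat \<Rightarrow> 'n::finite \<Rightarrow> bit) \<Rightarrow> ('n \<Rightarrow> bit) set \<Rightarrow> (nat \<Rightarrow> 'n \<Rightarrow> bit) \<Rightarrow> ('n \<Rightarrow> bit) set \<Rightarrow> bool" where
  "cnot_transversal_with k A Cb B Cd \<longleftrightarrow>
     (\<forall>psi phi. transversal_cnot (tensor (logical_ket A Cb k psi) (logical_ket B Cd k phi))
               = tensor (logical_ket A Cb k psi) (logical_ket B Cd k (psi + phi)))"

definition triorthogonal :: "nat \<Rightarrow> (nat \<Rightarrow> 'n::finite \<Rightarrow> bit) \<Rightarrow> bool" where
  "triorthogonal m G \<longleftrightarrow>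
     (\<forall>a<m. \<forall>b<m. a \<noteq> b \<longrightarrow> (\<Sum>i\<in>UNIV. G a i * G b i) = 0) \<and>
     (\<forall>a<m. \<forall>b<m. \<forall>c<m. a \<noteq> b \<and> a \<noteq> c \<and> b \<noteq> c \<longrightarrow> (\<Sum>i\<in>UNIV. G a i * G b i * G c i) = 0)"

definition rows_independent :: "nat \<Rightarrow> (nat \<Rightarrow> 'n \<Rightarrow> bit) \<Rightarrow> bool" where
  "rows_independent m G \<longleftrightarrow> (\<forall>a. (\<Sum>i<m. smul (a i) (G i)) = 0 \<longrightarrow> (\<forall>i<m. a i = 0))"

end

theory Submission imports Defs "HOL-Library.Cardinality" "HOL-Library.FuncSet" "HOL-Computational_Algebra.Primes"
begin

declare add_bit_eq_xor[simp del] mult_bit_eq_and[simp del]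

instance bit :: finite
proof
  have "(UNIV :: bit set) = {0, 1}" by (auto intro: bit.exhaust)
  then show "finite (UNIV :: bit set)" by (metis finite.emptyI finite.insertI)
qed

lemma card_bit: "CARD(bit) = 2"
proof -
  have "(UNIV :: bit set) = {0, 1}" by (auto intro: bit.exhaust)
  moreover have "card {0::bit, 1} = 2" by simp
  ultimately show ?thesis by simp
qed

lemma card_vec: "CARD('n::finite \<Rightarrow> bit) = 2 ^ CARD('n)"
  by (simp add: card_fun card_bit)

lemma bit_add_self[simp]: "(a::bit) + a = 0"
  by (cases a) simp_all

lemma vec_add_self[simp]: "(v::'n \<Rightarrow> bit) + v = 0"
  by (rule ext) simp

lemma vec_add_cancel1[simp]: "(v::'n \<Rightarrow> bit) + (v + w) = w"
  by (simp add: add.assoc[symmetric])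

lemma vec_add_cancel2[simp]: "(w::'n \<Rightarrow> bit) + v + v = w"
  by (simp add: add.assoc)

lemma dot_add_left: "dot (x + y) z = dot x z + dot y z"
  by (simp add: dot_def distrib_right sum.distrib)

lemma dot_add_right: "dot x (y + z) = dot x y + dot x z"
  by (simp add: dot_def distrib_left sum.distrib)

lemma dot_comm: "dot x y = dot y x"
  by (simp add: dot_def mult.commute)

lemma dot_smul_left: "dot (smul c x) y = c * dot x y"
  by (simp add: dot_def smul_def sum_distrib_left mult.assoc)

lemma dot_zero_left[simp]: "dot 0 y = 0"
  by (simp add: dot_def)

lemma dot_sum_left: "finite S \<Longrightarrow> dot (\<Sum>i\<in>S. f i) y = (\<Sum>i\<in>S. dot (f i) y)"
proof (induction S rule: finite_induct)
  case empty
  then show ?case by (simp only: sum.empty dot_zero_left)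
next
  case (insert x F)
  have "dot (sum f (insert x F)) y = dot (f x + sum f F) y" by (simp only: sum.insert[OF insert(1,2)])
  also have "\<dots> = dot (f x) y + (\<Sum>i\<in>F. dot (f i) y)" by (simp only: dot_add_left insert(3))
  also have "\<dots> = (\<Sum>i\<in>insert x F. dot (f i) y)" by (simp only: sum.insert[OF insert(1,2)])
  finally show ?case .
qed

lemma smul_add: "smul (a + b) v = smul a v + smul b v"
  by (rule ext) (simp add: smul_def distrib_right)

lemma smul_zero[simp]: "smul 0 v = 0"
  by (rule ext) (simp add: smul_def)

lemma enc_add: "enc A k (psi + phi) = enc A k psi + enc A k phi"
  by (simp add: enc_def smul_add sum.distrib)

lemma dual_add: "x \<in> dual C \<Longrightarrow> y \<in> dual C \<Longrightarrow> x + y \<in> dual C"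
  by (simp add: dual_def dot_add_left)

lemma dual_zero: "0 \<in> dual C"
  by (simp add: dual_def)

lemma dual_anti: "A \<subseteq> B \<Longrightarrow> dual B \<subseteq> dual A"
  by (auto simp: dual_def)

lemma sub_dual_dual: "A \<subseteq> dual (dual A)"
  by (auto simp: dual_def dot_comm)

lemma dot_self: "dot x x = of_nat (wt x)"
proof -
  have "dot x x = (\<Sum>i\<in>UNIV. x i)"
    unfolding dot_def by (rule sum.cong) (auto intro: bit.exhaust[of "x _"])
  also have "\<dots> = (\<Sum>i\<in>UNIV. if x i \<noteq> 0 then 1 else 0)"
    by (rule sum.cong) auto
  also have "\<dots> = of_nat (wt x)"
    by (simp add: sum.If_cases wt_def)
  finally show ?thesis .
qed

lemma bit_of_nat_odd: "odd n \<Longrightarrow> (of_nat n :: bit) = 1"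
proof -
  assume "odd n"
  then obtain q where "n = 2 * q + 1" by (metis oddE)
  then show ?thesis by simp
qed

definition chi :: "bit \<Rightarrow> int" where "chi b = (if b = 0 then 1 else -1)"

lemma chi_flip: "chi (b + 1) = - chi b"
  by (cases b) (simp_all add: chi_def)

lemma flip_sum_zero:
  fixes f :: "'a \<Rightarrow> int"
  assumes "bij_betw g S S" "\<And>x. x \<in> S \<Longrightarrow> f (g x) = - f x"
  shows "sum f S = 0"
proof -
  have "sum f S = sum (\<lambda>x. f (g x)) S" using sum.reindex_bij_betw[OF assms(1), of f] by simp
  also have "\<dots> = - sum f S" using assms(2) by (simp add: sum_negf)
  finally show ?thesis by simp
qed

lemma char_sum_nonzero:
  fixes x :: "'n::finite \<Rightarrow> bit"
  assumes "x \<noteq> 0"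
  shows "(\<Sum>y\<in>UNIV. chi (dot x y)) = 0"
proof -
  obtain i where xi: "x i = 1"
  proof -
    have "\<exists>i. x i \<noteq> 0"
    proof (rule ccontr)
      assume "\<not> (\<exists>i. x i \<noteq> 0)"
      then have "x = 0" by (auto simp: fun_eq_iff)
      then show False using assms by simp
    qed
    then show ?thesis using that by auto
  qed
  define e :: "'n \<Rightarrow> bit" where "e = (\<lambda>j. if j = i then 1 else 0)"
  have de: "dot x e = 1"
  proof -
    have "dot x e = (\<Sum>j\<in>UNIV. if j = i then x j else 0)"
      unfolding dot_def e_def by (rule sum.cong) auto
    also have "\<dots> = 1" using xi by simp
    finally show ?thesis .
  qed
  show ?thesis
  proof (rule flip_sum_zero[where g = "\<lambda>y. y + e"])
    show "bij_betw (\<lambda>y. y + e) UNIV UNIV"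
      by (rule bij_betw_byWitness[where f' = "\<lambda>y. y + e"]) auto
    fix y
    show "chi (dot x (y + e)) = - chi (dot x y)"
      by (simp only: dot_add_right de chi_flip)
  qed
qed

lemma char_sum_notdual:
  fixes C :: "('n::finite \<Rightarrow> bit) set"
  assumes lin: "linear_code C" and y: "y \<notin> dual C"
  shows "(\<Sum>x\<in>C. chi (dot x y)) = 0"
proof -
  obtain c where c: "c \<in> C" "dot c y = 1" using y unfolding dual_def by (auto simp: dot_comm)
  show ?thesis
  proof (rule flip_sum_zero[where g = "\<lambda>x. x + c"])
    show "bij_betw (\<lambda>x. x + c) C C"
      by (rule bij_betw_byWitness[where f' = "\<lambda>x. x + c"]) (use lin c in \<open>auto simp: linear_code_def\<close>)
    fix x
    show "chi (dot (x + c) y) = - chi (dot x y)"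
      by (simp only: dot_add_left c(2) chi_flip)
  qed
qed

lemma card_code_dual:
  fixes C :: "('n::finite \<Rightarrow> bit) set"
  assumes lin: "linear_code C"
  shows "card C * card (dual C) = 2 ^ CARD('n)"
proof -
  have "(\<Sum>y\<in>UNIV. \<Sum>x\<in>C. chi (dot x y)) = (\<Sum>y\<in>UNIV. if y \<in> dual C then int (card C) else 0)"
  proof (rule sum.cong)
    fix y assume "y \<in> (UNIV :: ('n \<Rightarrow> bit) set)"
    show "(\<Sum>x\<in>C. chi (dot x y)) = (if y \<in> dual C then int (card C) else 0)"
    proof (cases "y \<in> dual C")
      case True
      then have "\<forall>x\<in>C. chi (dot x y) = 1" by (auto simp: dual_def dot_comm chi_def)
      then show ?thesis using True by simp
    next
      case False
      then show ?thesis using char_sum_notdual[OF lin] by simp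
    qed
  qed simp
  also have "\<dots> = int (card C) * int (card (dual C))"
    by (simp add: sum.If_cases)
  finally have 1: "(\<Sum>y\<in>UNIV. \<Sum>x\<in>C. chi (dot x y)) = int (card C) * int (card (dual C))" .
  have "(\<Sum>x\<in>C. \<Sum>y\<in>UNIV. chi (dot x y)) = (\<Sum>x\<in>C. if x = 0 then int (2 ^ CARD('n)) else 0)"
  proof (rule sum.cong)
    fix x assume "x \<in> C"
    show "(\<Sum>y\<in>UNIV. chi (dot x y)) = (if x = 0 then int (2 ^ CARD('n)) else 0)"
      using char_sum_nonzero[of x] by (simp add: chi_def card_vec)
  qed simp
  also have "\<dots> = int (2 ^ CARD('n))"
    using lin by (simp add: linear_code_def sum.delta)
  finally have 2: "(\<Sum>x\<in>C. \<Sum>y\<in>UNIV. chi (dot x y)) = int (2 ^ CARD('n))" .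
  have "int (card C) * int (card (dual C)) = int (2 ^ CARD('n))"
  proof -
    have "(\<Sum>x\<in>C. \<Sum>y\<in>UNIV. chi (dot x y)) = (\<Sum>y\<in>UNIV. \<Sum>x\<in>C. chi (dot x y))"
      by (rule sum.swap)
    then show ?thesis using 1 2 by simp
  qed
  then show ?thesis by (metis of_nat_eq_iff of_nat_mult)
qed

lemma bit_swap_eq: "(a::bit) + b = c + d \<Longrightarrow> a + c = b + d"
  by (cases a; cases b; cases c; cases d) simp_all

lemma vec_swap_eq: "(a::'n \<Rightarrow> bit) + b = c + d \<Longrightarrow> a + c = b + d"
proof (rule ext)
  fix x assume h: "a + b = c + d"
  have "(a + b) x = (c + d) x" using h by simp
  then have "a x + b x = c x + d x" by simp
  then have "a x + c x = b x + d x" by (rule bit_swap_eq)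
  then show "(a + c) x = (b + d) x" by simp
qed

lemma bit_sum0: "(a::bit) + b = 0 \<Longrightarrow> a = b"
  by (cases a; cases b) simp_all

lemma vec_eq_add: "((v::'n \<Rightarrow> bit) = e + y) \<longleftrightarrow> (y = v + e)"
proof
  assume "v = e + y" then show "y = v + e" by (simp add: add.commute[of e y] add.assoc)
next
  assume "y = v + e" then show "v = e + y" by (simp add: add.commute[of v e])
qed

lemma smul_one[simp]: "smul 1 v = v"
  by (rule ext) (simp add: smul_def)

lemma code_sum:
  assumes lin: "linear_code C" and fin: "finite S" and v: "\<And>i. i \<in> S \<Longrightarrow> v i \<in> C"
  shows "(\<Sum>i\<in>S. smul (c i) (v i)) \<in> C"
  using fin v
proof (induction S rule: finite_induct)
  case empty
  then show ?case using lin unfolding linear_code_def by (simp only: sum.empty)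
next
  case (insert x F)
  have "smul (c x) (v x) \<in> C"
    using insert(4)[of x] lin by (cases "c x") (auto simp: linear_code_def)
  moreover have "(\<Sum>i\<in>F. smul (c i) (v i)) \<in> C" using insert by auto
  moreover have "(\<Sum>i\<in>insert x F. smul (c i) (v i)) = smul (c x) (v x) + (\<Sum>i\<in>F. smul (c i) (v i))"
    by (simp only: sum.insert[OF insert(1,2)])
  ultimately show ?case using lin unfolding linear_code_def by metis
qed

lemma logical_ket_eq:
  "logical_ket A Cb k psi v = (if v + enc A k psi \<in> dual Cb then 1 / sqrt (real (card (dual Cb))) else 0)"
proof -
  have "(\<Sum>y\<in>dual Cb. basis_ket (enc A k psi + y) v) = (\<Sum>y\<in>dual Cb. if y = v + enc A k psi then 1 else 0)"
    unfolding basis_ket_def by (rule sum.cong) (simp_all only: vec_eq_add)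
  also have "\<dots> = (if v + enc A k psi \<in> dual Cb then 1 else 0)"
    by (simp add: sum.delta')
  finally show ?thesis unfolding logical_ket_def by simp
qed

lemma cnot_eq: "transversal_cnot s q = s (fst q, fst q + snd q)"
proof -
  have "transversal_cnot s q = (\<Sum>p\<in>UNIV. if p = (fst q, fst q + snd q) then s p else 0)"
    unfolding transversal_cnot_def basis_ket_def
  proof (rule sum.cong)
    fix p :: "('a \<Rightarrow> bit) \<times> ('a \<Rightarrow> bit)"
    have "(q = (fst p, fst p + snd p)) \<longleftrightarrow> (p = (fst q, fst q + snd q))"
    proof (cases p; cases q)
      fix a b c d assume pq: "p = (a, b)" "q = (c, d)"
      have "(d = a + b) = (b = d + a)" by (simp only: vec_eq_add)
      moreover have "d + a = a + d" by (rule add.commute)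
      ultimately show ?thesis using pq by auto
    qed
    then show "s p * (if q = (fst p, fst p + snd p) then 1 else 0) = (if p = (fst q, fst q + snd q) then s p else 0)"
      by simp
  qed simp
  also have "\<dots> = s (fst q, fst q + snd q)" by (simp add: sum.delta')
  finally show ?thesis .
qed

lemma bit_rearr: "(a::bit) + b + p = (b + (s + p)) + (a + s)"
  by (cases a; cases b; cases p; cases s) simp_all

lemma vec_rearr: "(a::'n \<Rightarrow> bit) + b + p = (b + (s + p)) + (a + s)"
  by (rule ext) (simp only: plus_fun_apply bit_rearr)

theorem lemma1:
  fixes G :: "nat \<Rightarrow> 'n::finite \<Rightarrow> bit"
    and m k :: nat
    and C1 C2 C :: "('n \<Rightarrow> bit) set"
  assumes km: "k \<le> m"
    and tri: "triorthogonal m G"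
    and indep: "rows_independent m G"
    and odd_rows: "\<forall>i<m. (odd (wt (G i)) \<longleftrightarrow> i < k)"
    and C1_def: "C1 = row_span {..<m} G"
    and C2_def: "C2 = dual (row_span {k..<m} G)"
    and T_tri: "\<forall>psi. transversal_X (logical_ket G C2 k psi) = logical_ket G C2 k (psi + 1)"
    and C_lin: "linear_code C"
    and C_between: "C1 \<subseteq> C" "C \<subseteq> C2"
    and C_sym: "is_CSS C C"
    and C_k: "css_k C C = k"
  shows "is_mapping_matrix C1 C2 k G \<and> (\<exists>B. is_mapping_matrix C C k B \<and> cnot_transversal_with k G C2 B C)
         \<and> css_distance C C \<ge> css_distance C1 C2"
proof -
  have orth: "dot (G a) (G b) = 0" if "a < m" "b < m" "a \<noteq> b" for a b
    using tri that unfolding triorthogonal_def dot_def by blast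
  have self: "dot (G j) (G j) = 1" if "j < k" for j
    using odd_rows that km by (simp add: dot_self bit_of_nat_odd)
  have dot_enc: "dot (enc G k psi) (G j) = psi j" if "j < k" for psi j
  proof -
    have "dot (enc G k psi) (G j) = (\<Sum>i<k. psi i * dot (G i) (G j))"
      unfolding enc_def by (simp add: dot_sum_left dot_smul_left)
    also have "\<dots> = (\<Sum>i<k. if i = j then psi j else 0)"
      by (rule sum.cong) (use that km orth self in auto)
    also have "\<dots> = psi j" using that by simp
    finally show ?thesis .
  qed
  have G_C1: "G j \<in> C1" if "j < m" for j
  proof -
    have "(\<Sum>i<m. smul (if i = j then 1 else 0) (G i)) = (\<Sum>i<m. if i = j then G j else 0)"
      by (rule sum.cong) auto
    also have "\<dots> = G j" using that by simp
    finally have e: "(\<Sum>i<m. smul (if i = j then 1 else 0) (G i)) = G j" .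
    show ?thesis unfolding C1_def row_span_def
      by (rule CollectI, rule exI[of _ "\<lambda>i. if i = j then 1 else 0"]) (simp only: e simp_thms)
  qed
  have G_C2: "G j \<in> C2" if "j < k" for j
    unfolding C2_def dual_def row_span_def
  proof (safe)
    fix a
    have "dot (G j) (\<Sum>i\<in>{k..<m}. smul (a i) (G i)) = (\<Sum>i\<in>{k..<m}. a i * dot (G i) (G j))"
      by (simp add: dot_comm[of "G j"] dot_sum_left dot_smul_left)
    also have "\<dots> = 0"
      by (rule sum.neutral) (use that km orth in \<open>auto simp: dot_comm\<close>)
    finally show "dot (G j) (\<Sum>i\<in>{k..<m}. smul (a i) (G i)) = 0" .
  qed
  have G_C: "G j \<in> C" if "j < k" for j using G_C1 C_between km that by auto
  have enc0: "enc G k psi = 0" if "\<forall>j<k. psi j = 0" for psi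
    unfolding enc_def by (rule sum.neutral) (use that in simp)
  have dC2: "dual C2 \<subseteq> dual C" using dual_anti[OF C_between(2)] .
  have dCC: "dual C \<subseteq> C" using C_sym by (simp add: is_CSS_def)
  have enc_C: "enc G k psi \<in> C" for psi
    unfolding enc_def by (rule code_sum[OF C_lin]) (use G_C in auto)
  have P1: "is_mapping_matrix C1 C2 k G"
    unfolding is_mapping_matrix_def
  proof (intro conjI allI impI ballI)
    fix i assume "i < k" then show "G i \<in> C1" using G_C1 km by simp
  next
    fix psi i assume h: "enc G k psi \<in> dual C2" "i < k"
    then show "psi i = 0" using dot_enc[of i psi] G_C2[of i] by (auto simp: dual_def)
  next
    fix x assume "x \<in> C1"
    then obtain a where x: "x = (\<Sum>i<m. smul (a i) (G i))" unfolding C1_def row_span_def by blast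
    define E where "E = (\<Sum>i<k. smul (a i) (G i))"
    define R where "R = (\<Sum>i\<in>{k..<m}. smul (a i) (G i))"
    have "(\<Sum>i<m. smul (a i) (G i)) = (\<Sum>i\<in>{0..<k}. smul (a i) (G i)) + (\<Sum>i\<in>{k..<m}. smul (a i) (G i))"
      using sum.atLeastLessThan_concat[of 0 k m "\<lambda>i. smul (a i) (G i)"] km by (simp only: atLeast0LessThan)
    then have xe: "x = E + R" unfolding x E_def R_def by (simp only: atLeast0LessThan)
    have "x + enc G k a = E + R + E" unfolding xe E_def enc_def ..
    also have "\<dots> = R + E + E" by (simp only: add.commute[of E R])
    also have "\<dots> = R" by (rule vec_add_cancel2)
    finally have "x + enc G k a = (\<Sum>i\<in>{k..<m}. smul (a i) (G i))" unfolding R_def .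
    also have "\<dots> \<in> dual C2"
    proof -
      have "(\<Sum>i\<in>{k..<m}. smul (a i) (G i)) \<in> row_span {k..<m} G"
        unfolding row_span_def by (rule CollectI, rule exI[of _ a]) simp
      then show ?thesis unfolding C2_def by (rule subsetD[OF sub_dual_dual])
    qed
    finally show "\<exists>psi. x + enc G k psi \<in> dual C2" by blast
  qed
  have span: "\<exists>psi. x + enc G k psi \<in> dual C" if xC: "x \<in> C" for x
  proof -
    define n where "n = CARD('n)"
    have prod: "card C * card (dual C) = 2 ^ n" using card_code_dual[OF C_lin] n_def by simp
    then have "card C dvd 2 ^ n" by (metis dvd_triv_left)
    then obtain i where i: "i \<le> n" "card C = 2 ^ i" using divides_primepow_nat[of 2] by auto
    have cd: "code_dim C = i" unfolding code_dim_def using i(2) by (auto simp: power_inject_exp)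
    have "2 ^ n = (2::nat) ^ i * 2 ^ (n - i)" using i(1) by (simp flip: power_add)
    then have cdual: "card (dual C) = 2 ^ (n - i)" using prod i(2) by simp
    have "card (dual C) \<le> card C" using dCC by (simp add: card_mono)
    then have "n - i \<le> i" using cdual i(2) by simp
    moreover have "k = i + i - n" using C_k cd n_def by (simp add: css_k_def)
    ultimately have kk: "k + (n - i) = i" using i(1) by simp
    define P where "P = PiE {..<k} (\<lambda>_. UNIV :: bit set)"
    have cP: "card P = 2 ^ k" unfolding P_def by (simp add: card_PiE card_bit)
    define Phi where "Phi = (\<lambda>(f, z). enc G k f + z)"
    have inj: "inj_on Phi (P \<times> dual C)"
    proof (rule inj_onI, clarify)
      fix f z f' z'
      assume f: "f \<in> P" "z \<in> dual C" "f' \<in> P" "z' \<in> dual C" and eq: "Phi (f, z) = Phi (f', z')"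
      have "enc G k f + z = enc G k f' + z'" using eq unfolding Phi_def by simp
      then have "enc G k f + enc G k f' = z + z'" by (rule vec_swap_eq)
      then have "enc G k (f + f') \<in> dual C" using dual_add[OF f(2) f(4)] by (simp add: enc_add)
      then have "\<forall>j<k. (f + f') j = 0"
      proof (intro allI impI)
        fix j assume j: "j < k" and d: "enc G k (f + f') \<in> dual C"
        have "dot (enc G k (f + f')) (G j) = 0" using d G_C[OF j] unfolding dual_def by blast
        then show "(f + f') j = 0" using dot_enc[OF j, of "f + f'"] by simp
      qed
      then have ff: "f = f'"
      proof (intro ext)
        fix j
        assume h: "\<forall>j<k. (f + f') j = 0"
        show "f j = f' j"
        proof (cases "j < k")
          case True
          then have "f j + f' j = 0" using h by simp
          then show ?thesis by (rule bit_sum0)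
        next
          case False
          then show ?thesis using f(1,3) unfolding P_def by (simp add: PiE_def extensional_def)
        qed
      qed
      then show "f = f' \<and> z = z'" using eq unfolding Phi_def by simp
    qed
    have sub: "Phi ` (P \<times> dual C) \<subseteq> C"
      unfolding Phi_def using enc_C dCC C_lin by (auto simp: linear_code_def)
    have "card (Phi ` (P \<times> dual C)) = card (P \<times> dual C)" using card_image[OF inj] .
    also have "\<dots> = 2 ^ k * 2 ^ (n - i)" using cP cdual by (simp add: card_cartesian_product)
    also have "\<dots> = card C" using kk i(2) by (simp flip: power_add)
    finally have "card (Phi ` (P \<times> dual C)) = card C" .
    then have "Phi ` (P \<times> dual C) = C" using card_subset_eq[OF _ sub] by simp
    then have "x \<in> Phi ` (P \<times> dual C)" using xC by simp
    then obtain p where p: "p \<in> P \<times> dual C" "x = Phi p" by blast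
    obtain f z where fz: "p = (f, z)" by (cases p)
    have z: "z \<in> dual C" using p fz by simp
    have "x = enc G k f + z" using p fz unfolding Phi_def by simp
    then have "x + enc G k f = z + enc G k f + enc G k f" by (simp only: add.commute)
    also have "\<dots> = z" by (rule vec_add_cancel2)
    finally show ?thesis using z by blast
  qed
  have P2: "is_mapping_matrix C C k G"
    unfolding is_mapping_matrix_def
  proof (intro conjI allI impI ballI)
    fix i assume "i < k" then show "G i \<in> C" using G_C by simp
  next
    fix psi i assume h: "enc G k psi \<in> dual C" "i < k"
    then show "psi i = 0" using dot_enc[of i psi] G_C[of i] by (auto simp: dual_def)
  next
    fix x assume "x \<in> C" then show "\<exists>psi. x + enc G k psi \<in> dual C" by (rule span)
  qed
  have dshift: "(w \<in> dual C) \<longleftrightarrow> (w + u \<in> dual C)" if "u \<in> dual C" for w u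
    using dual_add[OF _ that] dual_add[of "w + u" C u] that by (auto simp: add.assoc)
  have P3: "cnot_transversal_with k G C2 G C"
    unfolding cnot_transversal_with_def
  proof (intro allI ext)
    fix psi phi :: "nat \<Rightarrow> bit" and q :: "('n \<Rightarrow> bit) \<times> ('n \<Rightarrow> bit)"
    obtain a b where q: "q = (a, b)" by (cases q)
    show "transversal_cnot (tensor (logical_ket G C2 k psi) (logical_ket G C k phi)) q =
          tensor (logical_ket G C2 k psi) (logical_ket G C k (psi + phi)) q"
    proof (cases "a + enc G k psi \<in> dual C2")
      case False
      then show ?thesis unfolding q cnot_eq tensor_def by (simp add: logical_ket_eq)
    next
      case True
      then have u: "a + enc G k psi \<in> dual C" using dC2 by auto
      have e: "a + b + enc G k phi = (b + enc G k (psi + phi)) + (a + enc G k psi)"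
        unfolding enc_add by (rule vec_rearr)
      have "(a + b + enc G k phi \<in> dual C) = (b + enc G k (psi + phi) \<in> dual C)"
        unfolding e by (rule dshift[OF u, symmetric])
      then show ?thesis unfolding q cnot_eq tensor_def by (simp add: logical_ket_eq)
    qed
  qed
  have sub: "C - dual C \<subseteq> C2 - dual C1"
  proof
    fix x assume x: "x \<in> C - dual C"
    show "x \<in> C2 - dual C1"
    proof
      show "x \<in> C2" using x C_between by auto
      show "x \<notin> dual C1"
      proof
        assume xd: "x \<in> dual C1"
        obtain psi where z: "x + enc G k psi \<in> dual C" using span x by auto
        have "\<forall>j<k. psi j = 0"
        proof (intro allI impI)
          fix j assume j: "j < k"
          have "dot x (G j) = 0" using xd G_C1[of j] j km by (auto simp: dual_def)
          moreover have "dot (x + enc G k psi) (G j) = 0" using z G_C[OF j] by (auto simp: dual_def)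
          ultimately show "psi j = 0" using dot_enc[OF j] by (simp add: dot_add_left)
        qed
        then have "x \<in> dual C" using z enc0 by simp
        then show False using x by simp
      qed
    qed
  qed
  have "css_distance C1 C2 \<le> (INF x \<in> C2 - dual C1. enat (wt x))"
    unfolding css_distance_def by simp
  also have "\<dots> \<le> (INF x \<in> C - dual C. enat (wt x))"
    by (rule INF_superset_mono[OF sub]) simp
  also have "\<dots> = css_distance C C" unfolding css_distance_def by simp
  finally have P4: "css_distance C C \<ge> css_distance C1 C2" .
  show ?thesis using P1 P2 P3 P4 by blast
qed

end
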